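(* Let $L$ be a Lie algebra over a field $K$, and let $\varphi: L \to L$ be a linear map. Then $\varphi$ is a Hom-Lie structure on $L$ if and only if the bilinear map $F_\varphi: L \times L \to L$ defined by $$F_\varphi(x,y) = [\varphi(x),y] + [x,\varphi(y)]$$ satisfies $$[F_\varphi(x,y),z] + [F_\varphi(z,x),y] + [F_\varphi(y,z),x] = 0$$ for all $x,y,z \in L$.
   Context: A Hom-Lie structure on a Lie algebra $L$ is a linear map $\varphi: L \to L$ satisfying the Hom-Jacobi equation $[[x,y],\varphi(z)] + [[z,x],\varphi(y)] + [[y,z],\varphi(x)] = 0$ for all $x,y,z \in L$. *)

theory Defs
  imports Main "HOL.Vector_Spaces"
begin

definition lie_algebra :: "('k::field \<Rightarrow> 'v::ab_group_add \<Rightarrow> 'v) \<Rightarrow> ('v \<Rightarrow> 'v \<Rightarrow> 'v) \<Rightarrow> bool" where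
  "lie_algebra sc br \<longleftrightarrow>
     vector_space sc \<and>
     (\<forall>x. Vector_Spaces.linear sc sc (\<lambda>y. br x y)) \<and>
     (\<forall>y. Vector_Spaces.linear sc sc (\<lambda>x. br x y)) \<and>
     (\<forall>x. br x x = 0) \<and>
     (\<forall>x y z. br x (br y z) + br y (br z x) + br z (br x y) = 0)"

definition hom_lie_structure :: "('v::ab_group_add \<Rightarrow> 'v \<Rightarrow> 'v) \<Rightarrow> ('v \<Rightarrow> 'v) \<Rightarrow> bool" where
  "hom_lie_structure br \<phi> \<longleftrightarrow>
     (\<forall>x y z. br (br x y) (\<phi> z) + br (br z x) (\<phi> y) + br (br y z) (\<phi> x) = 0)"

definition F_phi :: "('v \<Rightarrow> 'v \<Rightarrow> 'v::plus) \<Rightarrow> ('v \<Rightarrow> 'v) \<Rightarrow> 'v \<Rightarrow> 'v \<Rightarrow> 'v" where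
  "F_phi br \<phi> x y = br (\<phi> x) y + br x (\<phi> y)"

end

theory Submission
  imports Defs
begin

theorem lemma1p1:
  fixes sc :: "'k::field \<Rightarrow> 'v::ab_group_add \<Rightarrow> 'v"
    and br :: "'v \<Rightarrow> 'v \<Rightarrow> 'v"
    and \<phi> :: "'v \<Rightarrow> 'v"
  assumes "lie_algebra sc br"
    and "Vector_Spaces.linear sc sc \<phi>"
  shows "hom_lie_structure br \<phi> \<longleftrightarrow>
    (\<forall>x y z. br (F_phi br \<phi> x y) z + br (F_phi br \<phi> z x) y + br (F_phi br \<phi> y z) x = 0)"
proof -
  have L1: "\<And>x. Vector_Spaces.linear sc sc (\<lambda>y. br x y)"
    and L2: "\<And>y. Vector_Spaces.linear sc sc (\<lambda>x. br x y)"
    and alt: "\<And>x. br x x = 0"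
    and jac: "\<And>x y z. br x (br y z) + br y (br z x) + br z (br x y) = 0"
    using assms(1) unfolding lie_algebra_def by auto
  have addR: "br x (a + b) = br x a + br x b" for x a b
    using L1[of x] unfolding Vector_Spaces.linear_def module_hom_iff by blast
  have addL: "br (a + b) y = br a y + br b y" for y a b
    using L2[of y] unfolding Vector_Spaces.linear_def module_hom_iff by blast
  have anti: "br x y = - br y x" for x y
  proof -
    have "0 = br (x+y) (x+y)" using alt by simp
    also have "\<dots> = br x x + br x y + (br y x + br y y)" by (simp add: addL addR)
    finally show ?thesis using alt by (simp add: eq_neg_iff_add_eq_0 add.commute)
  qed
  have jac2: "br (br a b) c + br (br b c) a + br (br c a) b = 0" for a b c
  proof -
    have "br (br a b) c + br (br b c) a + br (br c a) b = - (br c (br a b) + br a (br b c) + br b (br c a))"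
      using anti[of "br a b" c] anti[of "br b c" a] anti[of "br c a" b] by simp
    also have "\<dots> = 0" using jac[of a b c] by (simp add: algebra_simps)
    finally show ?thesis .
  qed
  have key: "br (F_phi br \<phi> x y) z + br (F_phi br \<phi> z x) y + br (F_phi br \<phi> y z) x
      = - (br (br x y) (\<phi> z) + br (br z x) (\<phi> y) + br (br y z) (\<phi> x))" for x y z
  proof -
    have a: "br (br (\<phi> x) y) z + br (br z (\<phi> x)) y = - br (br y z) (\<phi> x)"
      using jac2[of "\<phi> x" y z] by (simp add: algebra_simps eq_neg_iff_add_eq_0)
    have b: "br (br (\<phi> y) z) x + br (br x (\<phi> y)) z = - br (br z x) (\<phi> y)"
      using jac2[of "\<phi> y" z x] by (simp add: algebra_simps eq_neg_iff_add_eq_0)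
    have c: "br (br (\<phi> z) x) y + br (br y (\<phi> z)) x = - br (br x y) (\<phi> z)"
      using jac2[of "\<phi> z" x y] by (simp add: algebra_simps eq_neg_iff_add_eq_0)
    have "br (F_phi br \<phi> x y) z + br (F_phi br \<phi> z x) y + br (F_phi br \<phi> y z) x
      = (br (br (\<phi> x) y) z + br (br z (\<phi> x)) y) + (br (br (\<phi> y) z) x + br (br x (\<phi> y)) z)
        + (br (br (\<phi> z) x) y + br (br y (\<phi> z)) x)"
      unfolding F_phi_def addL by (simp add: algebra_simps)
    also have "\<dots> = - (br (br x y) (\<phi> z) + br (br z x) (\<phi> y) + br (br y z) (\<phi> x))"
      unfolding a b c by (simp add: algebra_simps)
    finally show ?thesis .
  qed
  show ?thesis unfolding hom_lie_structure_def key neg_equal_0_iff_equal by (rule refl)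
qed

end
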